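(* Let $k\in\mathbb{N}$, let $P$ be the uniform distribution on $[0,1]$ and let $\beta=\{\frac jk:1\leq j\leq k\}$. Then the conditional optimal set of $k$-points for $P$ with respect to $\beta$ is $\beta$ itself, and the $k$th conditional quantization error is $V_k=\frac{k+3}{12k^3}$.
   Context: For a Borel probability measure $P$ on $\mathbb{R}$ and finite $\beta\subset\mathbb{R}$ with $\mathrm{card}(\beta)=r$, for $n\geq r$, $V_n=\inf\{\int\min_{a\in\alpha\cup\beta}(x-a)^2dP(x):\mathrm{card}(\alpha)\leq n-r\}$; a set $\alpha\cup\beta$ attaining the infimum (with each point of $\beta$ having a Voronoi region of positive $P$-measure) is a conditional optimal set of $n$-points with respect to $\beta$. *)

theory Defs
  imports "HOL-Probability.Probability"
begin

definition distortion :: "real measure \<Rightarrow> real set \<Rightarrow> real" where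
  "distortion M S = (\<integral>x. Min ((\<lambda>a. (x - a)^2) ` S) \<partial>M)"

definition cond_quant_error :: "real measure \<Rightarrow> real set \<Rightarrow> nat \<Rightarrow> real" where
  "cond_quant_error M \<beta> n =
     Inf {distortion M (\<alpha> \<union> \<beta>) | \<alpha>. finite \<alpha> \<and> card \<alpha> \<le> n - card \<beta>}"

definition voronoi :: "real set \<Rightarrow> real \<Rightarrow> real set" where
  "voronoi S b = {x. \<forall>c\<in>S. \<bar>x - b\<bar> \<le> \<bar>x - c\<bar>}"

definition cond_optimal_set :: "real measure \<Rightarrow> real set \<Rightarrow> nat \<Rightarrow> real set \<Rightarrow> bool" where
  "cond_optimal_set M \<beta> n \<gamma> \<longleftrightarrow>
     (\<exists>\<alpha>. finite \<alpha> \<and> card \<alpha> \<le> n - card \<beta> \<and> \<gamma> = \<alpha> \<union> \<beta> \<and>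
          distortion M \<gamma> = cond_quant_error M \<beta> n \<and>
          (\<forall>b\<in>\<beta>. measure M (voronoi \<gamma> b) > 0))"

end

theory Submission
  imports Defs
begin

lemma sq_int:
  fixes a b c :: real
  assumes "a \<le> b"
  shows "((\<lambda>x. (x - c)^2) has_integral ((b-c)^3/3 - (a-c)^3/3)) {a..b}"
proof -
  have "((\<lambda>x. (x-c)^3/3) has_vector_derivative (x-c)^2) (at x within {a..b})" for x
  proof -
    have "((\<lambda>x. (x-c)^3/3) has_real_derivative (x-c)^2) (at x within {a..b})"
      by (auto intro!: derivative_eq_intros simp: power2_eq_square)
    then show ?thesis using has_real_derivative_iff_has_vector_derivative by blast
  qed
  then show ?thesis
    using fundamental_theorem_of_calculus[OF assms, of "\<lambda>x. (x-c)^3/3" "\<lambda>x. (x-c)^2"] by simp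
qed

lemma near_nat:
  fixes y :: real and m j :: nat
  assumes "real m - 1/2 \<le> y" "y \<le> real m + 1/2"
  shows "\<bar>y - real m\<bar> \<le> \<bar>y - real j\<bar>"
proof (cases "j = m")
  case False
  then consider "j < m" | "j > m" by linarith
  then show ?thesis
  proof cases
    case 1
    then have "real j \<le> real m - 1" by simp
    then show ?thesis using assms by linarith
  next
    case 2
    then have "real j \<ge> real m + 1" by simp
    then show ?thesis using assms by linarith
  qed
qed simp

lemma near_one:
  fixes y :: real and j :: nat
  assumes "0 \<le> y" "y \<le> 1" "1 \<le> j"
  shows "\<bar>y - 1\<bar> \<le> \<bar>y - real j\<bar>"
proof -
  have "real j \<ge> 1" using assms by simp
  then show ?thesis using assms by linarith
qed

lemma scale_abs:
  fixes x K :: real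
  assumes "K > 0"
  shows "\<bar>x - a / K\<bar> = \<bar>x * K - a\<bar> / K"
proof -
  have "x - a / K = (x * K - a) / K" using assms by (simp add: field_simps)
  then show ?thesis using assms by simp
qed


theorem proposition4p1:
  fixes k :: nat
  assumes "k \<ge> 1"
  defines "P \<equiv> uniform_measure lborel {0..(1::real)}"
      and "\<beta> \<equiv> {real j / real k | j. 1 \<le> j \<and> j \<le> k}"
  shows "(\<forall>\<gamma>. cond_optimal_set P \<beta> k \<gamma> \<longleftrightarrow> \<gamma> = \<beta>)
         \<and> cond_quant_error P \<beta> k = (real k + 3) / (12 * real k ^ 3)"
proof -
  define K where "K = real k"
  have K0: "K > 0" using assms(1) by (simp add: K_def)
  have beta_img: "\<beta> = (\<lambda>j. real j / K) ` {1..k}"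
    unfolding \<beta>_def K_def by auto
  have fin: "finite \<beta>" using beta_img by simp
  have inj: "inj_on (\<lambda>j. real j / K) {1..k}"
    using K0 by (auto simp: inj_on_def)
  have card: "card \<beta> = k" using beta_img card_image[OF inj] by simp
  have ne: "\<beta> \<noteq> {}" using beta_img assms(1) by auto
  define f where "f = (\<lambda>x::real. Min ((\<lambda>a. (x-a)^2) ` \<beta>))"
  have f_eq: "f x = (x - p)^2" if "p \<in> \<beta>" "\<forall>q\<in>\<beta>. \<bar>x - p\<bar> \<le> \<bar>x - q\<bar>" for x p
    unfolding f_def
  proof (rule Min_eqI)
    show "finite ((\<lambda>a. (x - a)\<^sup>2) ` \<beta>)" using fin by simp
    show "(x - p)\<^sup>2 \<in> (\<lambda>a. (x - a)\<^sup>2) ` \<beta>" using that by simp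
    fix y assume "y \<in> (\<lambda>a. (x - a)\<^sup>2) ` \<beta>"
    then obtain q where "q \<in> \<beta>" "y = (x-q)^2" by auto
    then show "(x - p)\<^sup>2 \<le> y" using that abs_le_square_iff by metis
  qed
  have f_mid: "f x = (x - real m / K)^2"
    if "1 \<le> m" "m \<le> k" "real m - 1/2 \<le> x * K" "x * K \<le> real m + 1/2" for x m
  proof (rule f_eq)
    show "real m / K \<in> \<beta>" using that beta_img by auto
    show "\<forall>q\<in>\<beta>. \<bar>x - real m / K\<bar> \<le> \<bar>x - q\<bar>"
    proof
      fix q assume "q \<in> \<beta>"
      then obtain j where q: "q = real j / K" using beta_img by auto
      show "\<bar>x - real m / K\<bar> \<le> \<bar>x - q\<bar>"
        unfolding q scale_abs[OF K0]
        using near_nat[OF that(3,4), of j] K0 by (simp add: divide_right_mono)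
    qed
  qed
  have f_base: "f x = (x - 1 / K)^2" if "0 \<le> x * K" "x * K \<le> 1" for x
  proof -
    have "f x = (x - real (1::nat) / K)^2"
    proof (rule f_eq)
      show "real (1::nat) / K \<in> \<beta>" using assms(1) beta_img by auto
      show "\<forall>q\<in>\<beta>. \<bar>x - real (1::nat) / K\<bar> \<le> \<bar>x - q\<bar>"
      proof
        fix q assume "q \<in> \<beta>"
        then obtain j where qj: "j \<in> {1..k}" "q = real j / K" using beta_img by blast
        then have q: "q = real j / K" "1 \<le> j" by auto
        show "\<bar>x - real (1::nat) / K\<bar> \<le> \<bar>x - q\<bar>"
          unfolding q scale_abs[OF K0]
          using near_one[OF that(1,2) q(2)] K0 by (simp add: divide_right_mono)
      qed
    qed
    then show ?thesis by simp
  qed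
  have ind: "1 \<le> m \<longrightarrow> m \<le> k \<longrightarrow>
      (f has_integral (1/(3*K^3) + (real m - 1)/(12*K^3))) {0..real m / K}" for m
  proof (induction m)
    case 0
    then show ?case by simp
  next
    case (Suc n)
    show ?case
    proof (cases "n = 0")
      case True
      have "((\<lambda>x. (x - 1/K)^2) has_integral ((1/K - 1/K)^3/3 - (0 - 1/K)^3/3)) {0..1/K}"
        using sq_int[of 0 "1/K" "1/K"] K0 by simp
      moreover have "(0 - 1/K)^3 = - (1 / K^3)" by (simp add: power_divide)
      ultimately have h: "((\<lambda>x. (x - 1/K)^2) has_integral (1/(3*K^3))) {0..1/K}" by (simp add: mult.commute)
      have "(f has_integral (1/(3*K^3))) {0..1/K}"
      proof (rule has_integral_eq[OF _ h])
        fix x assume "x \<in> {0..1/K}"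
        then have "0 \<le> x * K" "x * K \<le> 1" using K0 by (auto simp: field_simps)
        then show "(x - 1/K)^2 = f x" using f_base by simp
      qed
      then show ?thesis using True by simp
    next
      case False
      show ?thesis
      proof (intro impI)
        assume "Suc n \<le> k"
        have n1: "1 \<le> n" "n \<le> k" "Suc n \<le> k" using False \<open>Suc n \<le> k\<close> by auto
        have IH: "(f has_integral (1/(3*K^3) + (real n - 1)/(12*K^3))) {0..real n / K}"
          using Suc.IH n1 by simp
        define c where "c = (2 * real n + 1) / (2 * K)"
        have le1: "real n / K \<le> c" and le2: "c \<le> real (Suc n) / K"
          using K0 by (auto simp: c_def field_simps)
        have h1: "((\<lambda>x. (x - real n / K)^2) has_integral (1/(24*K^3))) {real n / K..c}"
        proof -
          have "c - real n / K = 1 / (2*K)" using K0 by (simp add: c_def field_simps)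
          then have "(c - real n / K)^3/3 - (real n / K - real n / K)^3/3 = 1/(24*K^3)"
            by (simp add: power_divide power_mult_distrib)
          then show ?thesis using sq_int[OF le1, of "real n / K"] by simp
        qed
        have h2: "((\<lambda>x. (x - real (Suc n) / K)^2) has_integral (1/(24*K^3))) {c..real (Suc n) / K}"
        proof -
          have "c - real (Suc n) / K = - (1 / (2*K))" using K0 by (simp add: c_def field_simps)
          then have "(real (Suc n) / K - real (Suc n) / K)^3/3 - (c - real (Suc n) / K)^3/3 = 1/(24*K^3)"
            by (simp add: power_divide power_mult_distrib)
          then show ?thesis using sq_int[OF le2, of "real (Suc n) / K"] by simp
        qed
        have g1: "(f has_integral (1/(24*K^3))) {real n / K..c}"
        proof (rule has_integral_eq[OF _ h1])
          fix x assume "x \<in> {real n / K..c}"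
          then have "real n - 1/2 \<le> x * K" "x * K \<le> real n + 1/2"
            using K0 by (auto simp: c_def field_simps)
          then show "(x - real n / K)^2 = f x" using f_mid[OF n1(1,2)] by simp
        qed
        have g2: "(f has_integral (1/(24*K^3))) {c..real (Suc n) / K}"
        proof (rule has_integral_eq[OF _ h2])
          fix x assume "x \<in> {c..real (Suc n) / K}"
          then have "real (Suc n) - 1/2 \<le> x * K" "x * K \<le> real (Suc n) + 1/2"
            using K0 by (auto simp: c_def field_simps)
          then show "(x - real (Suc n) / K)^2 = f x" using f_mid[OF _ n1(3)] by simp
        qed
        have "(f has_integral (1/(24*K^3) + 1/(24*K^3))) {real n / K..real (Suc n) / K}"
          by (rule has_integral_combine[OF le1 le2 g1 g2])
        moreover have "0 \<le> real n / K" using K0 by simp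
        moreover have "real n / K \<le> real (Suc n) / K" using le1 le2 by linarith
        ultimately have "(f has_integral ((1/(3*K^3) + (real n - 1)/(12*K^3)) + (1/(24*K^3) + 1/(24*K^3)))) {0..real (Suc n) / K}"
          using has_integral_combine IH by blast
        moreover have "(1/(3*K^3) + (real n - 1)/(12*K^3)) + (1/(24*K^3) + 1/(24*K^3))
             = 1/(3*K^3) + (real (Suc n) - 1)/(12*K^3)"
          using K0 by (simp add: field_simps)
        ultimately show "(f has_integral (1/(3*K^3) + (real (Suc n) - 1)/(12*K^3))) {0..real (Suc n) / K}"
          by simp
      qed
    qed
  qed
  have HK: "(f has_integral ((K + 3) / (12 * K^3))) {0..1}"
  proof -
    have "(f has_integral (1/(3*K^3) + (real k - 1)/(12*K^3))) {0..real k / K}"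
      using ind[of k] assms(1) by simp
    moreover have "real k / K = 1" using K0 by (simp add: K_def)
    moreover have "1/(3*K^3) + (real k - 1)/(12*K^3) = (K + 3) / (12 * K^3)"
      using K0 by (simp add: K_def field_simps)
    ultimately show ?thesis by simp
  qed
  have fmeas: "f \<in> borel_measurable borel"
    unfolding f_def using fin by measurable
  have fnn: "0 \<le> f x" for x
    unfolding f_def using fin ne by (simp add: Min_ge_iff)
  have abs: "f absolutely_integrable_on {0..1}"
    using nonnegative_absolutely_integrable_1[OF has_integral_integrable[OF HK]] fnn by simp
  have leb: "(LINT x:{0..1}|lebesgue. f x) = (K + 3) / (12 * K^3)"
    using has_integral_unique[OF has_integral_set_lebesgue[OF abs] HK] .
  have Peq: "P = density lborel (\<lambda>x. ennreal (indicator {0..1::real} x))"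
    unfolding P_def uniform_measure_def by (simp add: ennreal_indicator divide_ennreal_def)
  have dist: "distortion P \<beta> = (K + 3) / (12 * K^3)"
  proof -
    have "distortion P \<beta> = integral\<^sup>L P f" unfolding distortion_def f_def by simp
    also have "\<dots> = integral\<^sup>L lborel (\<lambda>x. indicator {0..1::real} x *\<^sub>R f x)"
      unfolding Peq by (rule integral_density) (use fmeas in auto)
    also have "\<dots> = integral\<^sup>L lebesgue (\<lambda>x. indicator {0..1::real} x *\<^sub>R f x)"
      by (rule integral_completion[symmetric]) (use fmeas in measurable)
    also have "\<dots> = (K + 3) / (12 * K^3)" using leb by (simp add: set_lebesgue_integral_def)
    finally show ?thesis .
  qed
  have alpha: "finite \<alpha> \<and> card \<alpha> \<le> k - card \<beta> \<longleftrightarrow> \<alpha> = {}" for \<alpha> :: "real set"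
    using card by auto
  have cqe: "cond_quant_error P \<beta> k = distortion P \<beta>"
  proof -
    have "{distortion P (\<alpha> \<union> \<beta>) | \<alpha>. finite \<alpha> \<and> card \<alpha> \<le> k - card \<beta>} = {distortion P \<beta>}"
      using alpha by auto
    then show ?thesis unfolding cond_quant_error_def by simp
  qed
  have vor: "measure P (voronoi \<beta> b) > 0" if hb: "b \<in> \<beta>" for b
  proof -
    obtain j where jj: "j \<in> {1..k}" "b = real j / K" using hb beta_img by blast
    then have j: "b = real j / K" "1 \<le> j" "j \<le> k" by auto
    define I where "I = {b - 1/(2*K) .. b}"
    have IV: "I \<subseteq> voronoi \<beta> b"
    proof
      fix x assume "x \<in> I"
      then have "real j - 1/2 \<le> x * K" "x * K \<le> real j + 1/2"
        using K0 by (auto simp: I_def j field_simps)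
      then have *: "\<bar>x * K - real j\<bar> \<le> \<bar>x * K - real i\<bar>" for i
        using near_nat by blast
      show "x \<in> voronoi \<beta> b" unfolding voronoi_def
      proof
        show "\<forall>c\<in>\<beta>. \<bar>x - b\<bar> \<le> \<bar>x - c\<bar>"
        proof
          fix c assume "c \<in> \<beta>"
          then obtain i where c: "c = real i / K" using beta_img by auto
          show "\<bar>x - b\<bar> \<le> \<bar>x - c\<bar>" unfolding c j scale_abs[OF K0]
            using *[of i] K0 by (simp add: divide_right_mono)
        qed
      qed
    qed
    have "voronoi \<beta> b = (\<Inter>c\<in>\<beta>. {x. \<bar>x - b\<bar> \<le> \<bar>x - c\<bar>})"
      unfolding voronoi_def by auto
    moreover have "closed (\<Inter>c\<in>\<beta>. {x::real. \<bar>x - b\<bar> \<le> \<bar>x - c\<bar>})"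
      by (intro closed_INT ballI closed_Collect_le continuous_intros)
    ultimately have Vm: "voronoi \<beta> b \<in> sets P" unfolding P_def by simp
    have Im: "I \<in> sets P" unfolding P_def I_def by simp
    have sub: "I \<subseteq> {0..1}"
    proof -
      have "real j \<le> K" "1 \<le> real j" using j by (auto simp: K_def)
      then have "1/K \<le> b" "b \<le> 1" unfolding j(1) using K0 by (auto simp: divide_right_mono)
      moreover have "1/(2*K) \<le> 1/K" using K0 by (simp add: field_simps)
      ultimately show ?thesis unfolding I_def by auto
    qed
    have "measure P I = measure lborel ({0..1::real} \<inter> I) / measure lborel {0..1::real}"
      unfolding P_def I_def by (rule measure_uniform_measure) auto
    also have "\<dots> = 1/(2*K)" using sub K0 by (simp add: Int_absorb1 I_def)
    finally have "measure P I > 0" using K0 by simp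
    moreover have "measure P I \<le> measure P (voronoi \<beta> b)"
    proof -
      interpret prob_space P unfolding P_def by (rule prob_space_uniform_measure) auto
      show ?thesis using IV Vm Im by (intro finite_measure_mono) auto
    qed
    ultimately show ?thesis by linarith
  qed
  have opt: "cond_optimal_set P \<beta> k \<gamma> \<longleftrightarrow> \<gamma> = \<beta>" for \<gamma>
    unfolding cond_optimal_set_def using alpha cqe vor by auto
  show ?thesis using opt cqe dist by (simp add: K_def)
qed

end
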